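(* Consider the resilient constrained consensus algorithm described in the context with exactly $f$ Byzantine agents, i.e. $|\mathcal F| = f$, and a fixed step size $\alpha>0$. Suppose that for every choice of initial states $x_i(0)\in\mathcal X_i$ ($i\in\mathcal H$), every behaviour of the Byzantine agents and every tie-breaking in the filtering step, all normal agents reach a consensus at some point of $\mathcal X=\bigcap_{i\in\mathcal H}\mathcal X_i$, meaning there exists $z\in\mathcal X$ with $x_i(t)\to z$ as $t\to\infty$ for all $i\in\mathcal H$. Then the set of normal agents $\mathcal H$ is $2f$-redundant.
   Context: Setting: There are $n$ agents $\mathcal N=\{1,\dots,n\}$, and every agent can communicate with every other agent (complete graph). An integer $f\ge 0$ is known to all agents. The agents are partitioned into normal agents $\mathcal H$ and Byzantine agents $\mathcal F$ with $|\mathcal F|\le f$, so $|\mathcal H|\ge n-f$. Which agents are Byzantine is unknown to the normal agents. Each normal agent $i\in\mathcal H$ has a nonempty closed convex set $\mathcal X_i\subseteq\mathbb R^m$, and $\mathcal X=\bigcap_{i\in\mathcal H}\mathcal X_i$ is nonempty. Each normal agent's state is constrained to lie in $\mathcal X_i$; in particular $x_i(0)\in\mathcal X_i$. Algorithm (discrete time $t=0,1,2,\dots$): each normal agent $i$ has a state $x_i(t)\in\mathbb R^m$. At time $t$, agent $i$ receives a vector $x_{ji}(t)$ from each $j\in\mathcal N\setminus\{i\}$. If $j\in\mathcal H$, then $x_{ji}(t)=x_j(t)$. If $j\in\mathcal F$, then $x_{ji}(t)$ is arbitrary and may differ for different recipients. Agent $i$ discards the $f$ received vectors with the largest Euclidean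 distance $\|x_i(t)-x_{ji}(t)\|$, with ties broken arbitrarily. Let $\mathcal M_i(t)\subseteq\mathcal N\setminus\{i\}$ be the set of the remaining $n-f-1$ senders. The update is $$x_i(t+1)=\mathrm P_{\mathcal X_i}\Big[x_i(t)+\alpha\sum_{j\in\mathcal M_i(t)}(x_{ji}(t)-x_i(t))\Big],$$ where $\alpha>0$ and $\mathrm P_{\mathcal C}[x]=\arg\min_{y\in\mathcal C}\|x-y\|$ is the Euclidean projection. Definition: $\mathcal H$ is $k$-redundant if for every $\mathcal S\subseteq\mathcal H$ with $|\mathcal S|\ge n-k$ we have $\bigcap_{i\in\mathcal S}\mathcal X_i=\bigcap_{i\in\mathcal H}\mathcal X_i$. *)

theory Defs
  imports "HOL-Analysis.Analysis"
begin

text \<open>A state trajectory is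
  x :: nat => nat => 'a, with x t i the state of agent i at time t
  (only meaningful for normal agents). Byzantine behaviour is an arbitrary
  function byz t j i = the vector agent j sends to agent i at time t.\<close>

definition received :: "nat set \<Rightarrow> (nat \<Rightarrow> nat \<Rightarrow> 'a) \<Rightarrow> (nat \<Rightarrow> nat \<Rightarrow> nat \<Rightarrow> 'a)
    \<Rightarrow> nat \<Rightarrow> nat \<Rightarrow> nat \<Rightarrow> 'a" where
  "received F x byz t j i = (if j \<in> F then byz t j i else x t j)"

definition valid_filter :: "nat \<Rightarrow> nat \<Rightarrow> nat \<Rightarrow> 'a::real_normed_vector \<Rightarrow> (nat \<Rightarrow> 'a) \<Rightarrow> nat set \<Rightarrow> bool" where
  "valid_filter n f i xi r M \<longleftrightarrow>
     M \<subseteq> {0..<n} - {i} \<and> card M = n - f - 1 \<and>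
     (\<forall>j\<in>M. \<forall>k\<in>({0..<n} - {i}) - M. dist xi (r j) \<le> dist xi (r k))"

definition is_execution :: "nat \<Rightarrow> nat \<Rightarrow> nat set \<Rightarrow> nat set \<Rightarrow> (nat \<Rightarrow> 'a::euclidean_space set)
    \<Rightarrow> real \<Rightarrow> (nat \<Rightarrow> nat \<Rightarrow> 'a) \<Rightarrow> (nat \<Rightarrow> nat \<Rightarrow> nat \<Rightarrow> 'a) \<Rightarrow> (nat \<Rightarrow> nat \<Rightarrow> nat set) \<Rightarrow> bool" where
  "is_execution n f H F X \<alpha> x byz M \<longleftrightarrow>
     (\<forall>i\<in>H. x 0 i \<in> X i) \<and>
     (\<forall>t. \<forall>i\<in>H. valid_filter n f i (x t i) (\<lambda>j. received F x byz t j i) (M t i) \<and>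
        x (Suc t) i = closest_point (X i)
          (x t i + \<alpha> *\<^sub>R (\<Sum>j\<in>M t i. received F x byz t j i - x t i)))"

text \<open>k-redundancy. READING: subsets S are required to be nonempty
  (only relevant in the degenerate case n \<le> k).\<close>
definition redundant :: "nat \<Rightarrow> nat \<Rightarrow> nat set \<Rightarrow> (nat \<Rightarrow> 'a set) \<Rightarrow> bool" where
  "redundant n k H X \<longleftrightarrow>
     (\<forall>S. S \<subseteq> H \<and> S \<noteq> {} \<and> int (card S) \<ge> int n - int k \<longrightarrow>
        (\<Inter>i\<in>S. X i) = (\<Inter>i\<in>H. X i))"

end

theory Submission
  imports Defs
begin

lemma exists_min_subset:
  fixes d :: "nat \<Rightarrow> real"
  assumes "finite A" "m \<le> card A"
  shows "\<exists>M. M \<subseteq> A \<and> card M = m \<and> (\<forall>j\<in>M. \<forall>k\<in>A - M. d j \<le> d k)"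
  using assms(2)
proof (induction m)
  case 0
  then show ?case by auto
next
  case (Suc m)
  then obtain M where M: "M \<subseteq> A" "card M = m" "\<forall>j\<in>M. \<forall>k\<in>A - M. d j \<le> d k" by auto
  have fM: "finite M" using M(1) assms(1) finite_subset by blast
  have "A - M \<noteq> {}"
  proof
    assume "A - M = {}"
    then have "A \<subseteq> M" by blast
    then have "card A \<le> card M" using fM card_mono by blast
    then show False using Suc.prems M(2) by simp
  qed
  moreover have fin: "finite (A - M)" using assms(1) by simp
  ultimately obtain k where k: "k \<in> A - M" "d k = Min (d ` (A - M))"
    by (metis (no_types, lifting) Min_in finite_imageI image_iff image_is_empty)
  have kmin: "\<forall>l\<in>A - M. d k \<le> d l" using k(2) fin by simp
  show ?case
  proof (intro exI[of _ "insert k M"] conjI)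
    show "insert k M \<subseteq> A" using M(1) k(1) by blast
    show "card (insert k M) = Suc m" using fM k(1) M(2) by simp
    show "\<forall>j\<in>insert k M. \<forall>l\<in>A - insert k M. d j \<le> d l"
      using M(3) kmin by auto
  qed
qed

lemma exists_valid_filter:
  fixes xi :: "'a::real_normed_vector"
  shows "\<exists>M. valid_filter n f i xi r M"
proof -
  have "n - f - 1 \<le> card ({0..<n} - {i})"
    by (cases "i < n") (auto simp: card_Diff_singleton_if)
  then obtain M where "M \<subseteq> {0..<n} - {i}" "card M = n - f - 1"
    "\<forall>j\<in>M. \<forall>k\<in>({0..<n} - {i}) - M. dist xi (r j) \<le> dist xi (r k)"
    using exists_min_subset[of "{0..<n} - {i}" "n - f - 1" "\<lambda>j. dist xi (r j)"] by auto
  then show ?thesis unfolding valid_filter_def by blast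
qed

theorem theorem1:
  fixes n f :: nat and H F :: "nat set" and X :: "nat \<Rightarrow> 'a::euclidean_space set"
    and \<alpha> :: real
  assumes part: "H \<union> F = {0..<n}" "H \<inter> F = {}"
    and cardF: "card F = f"
    and Xi: "\<forall>i\<in>H. X i \<noteq> {} \<and> closed (X i) \<and> convex (X i)"
    and Xne: "(\<Inter>i\<in>H. X i) \<noteq> {}"
    and alpha: "\<alpha> > 0"
    and consensus: "\<forall>x byz M. is_execution n f H F X \<alpha> x byz M \<longrightarrow>
        (\<exists>z\<in>(\<Inter>i\<in>H. X i). \<forall>i\<in>H. (\<lambda>t. x t i) \<longlonglongrightarrow> z)"
  shows "redundant n (2 * f) H X"
  unfolding redundant_def
proof (intro allI impI)
  fix S assume SA: "S \<subseteq> H \<and> S \<noteq> {} \<and> int n - int (2 * f) \<le> int (card S)"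
  then have SH: "S \<subseteq> H" and Sne: "S \<noteq> {}" and cS: "int n - int (2 * f) \<le> int (card S)"
    by auto
  have finH: "finite H" using part(1) by (metis finite_Un finite_atLeastLessThan)
  have finF: "finite F" using part(1) by (metis finite_Un finite_atLeastLessThan)
  have finS: "finite S" using SH finH finite_subset by blast
  show "(\<Inter>i\<in>S. X i) = (\<Inter>i\<in>H. X i)"
  proof (rule ccontr)
    assume neq: "(\<Inter>i\<in>S. X i) \<noteq> (\<Inter>i\<in>H. X i)"
    have "(\<Inter>i\<in>H. X i) \<subseteq> (\<Inter>i\<in>S. X i)" using SH by blast
    with neq obtain p where pS: "p \<in> (\<Inter>i\<in>S. X i)" and pH: "p \<notin> (\<Inter>i\<in>H. X i)" by blast
    have "\<forall>i\<in>S. \<exists>M. M \<subseteq> (S \<union> F) - {i} \<and> card M = n - f - 1"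
    proof
      fix i assume iS: "i \<in> S"
      have dj: "S \<inter> F = {}" using SH part(2) by blast
      have "card ((S \<union> F) - {i}) = card S + f - 1"
        using iS finS finF dj cardF by (simp add: card_Un_disjoint card_Diff_singleton_if)
      moreover have "card S \<ge> 1" using iS finS
        by (metis One_nat_def Suc_leI card_gt_0_iff empty_iff)
      ultimately have "n - f - 1 \<le> card ((S \<union> F) - {i})" using cS by linarith
      then show "\<exists>M. M \<subseteq> (S \<union> F) - {i} \<and> card M = n - f - 1"
        by (meson obtain_subset_with_card_n)
    qed
    then obtain M0 where M0: "\<forall>i\<in>S. M0 i \<subseteq> (S \<union> F) - {i} \<and> card (M0 i) = n - f - 1"
      by metis
    define byz where "byz = (\<lambda>(t::nat) (j::nat) (i::nat). p)"
    define rv where "rv = (\<lambda>(s::nat \<Rightarrow> 'a) j. if j \<in> F then p else s j)"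
    define Msel where "Msel = (\<lambda>(s::nat \<Rightarrow> 'a) i. if i \<in> S then M0 i
        else (SOME M. valid_filter n f i (s i) (rv s) M))"
    define step where "step = (\<lambda>(s::nat \<Rightarrow> 'a) i. closest_point (X i)
        (s i + \<alpha> *\<^sub>R (\<Sum>j\<in>Msel s i. rv s j - s i)))"
    define x0 where "x0 = (\<lambda>i. if i \<in> S then p else (SOME y. y \<in> X i))"
    define x where "x = (\<lambda>t. (step ^^ t) x0)"
    define M where "M = (\<lambda>t i. Msel (x t) i)"
    have xS: "x (Suc t) = step (x t)" for t unfolding x_def by simp
    have rcv: "received F x byz t j i = rv (x t) j" for t j i
      unfolding received_def rv_def byz_def by simp
    have xp: "\<forall>i\<in>S. x t i = p" for t
    proof (induction t)
      case 0
      then show ?case unfolding x_def x0_def by simp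
    next
      case (Suc t)
      show ?case
      proof
        fix i assume iS: "i \<in> S"
        have "\<forall>j\<in>M0 i. rv (x t) j - x t i = 0"
        proof
          fix j assume "j \<in> M0 i"
          then have "j \<in> S \<or> j \<in> F" using M0 iS by blast
          then show "rv (x t) j - x t i = 0" using Suc iS unfolding rv_def by auto
        qed
        then have "(\<Sum>j\<in>Msel (x t) i. rv (x t) j - x t i) = 0"
          unfolding Msel_def using iS by simp
        then show "x (Suc t) i = p" unfolding xS step_def using Suc iS pS
          by (simp add: closest_point_self)
      qed
    qed
    have exe: "is_execution n f H F X \<alpha> x byz M"
      unfolding is_execution_def
    proof (intro conjI allI ballI)
      fix i assume iH: "i \<in> H"
      show "x 0 i \<in> X i"
        using pS Xi iH unfolding x_def x0_def by (auto intro: someI_ex simp: ex_in_conv)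
    next
      fix t i assume iH: "i \<in> H"
      show "x (Suc t) i = closest_point (X i)
          (x t i + \<alpha> *\<^sub>R (\<Sum>j\<in>M t i. received F x byz t j i - x t i))"
        unfolding xS step_def M_def rcv by simp
      show "valid_filter n f i (x t i) (\<lambda>j. received F x byz t j i) (M t i)"
      proof (cases "i \<in> S")
        case True
        have sub: "M0 i \<subseteq> {0..<n} - {i}" using M0 True SH part(1) by blast
        have "\<forall>j\<in>M0 i. rv (x t) j = p"
        proof
          fix j assume "j \<in> M0 i"
          then have "j \<in> S \<or> j \<in> F" using M0 True by blast
          then show "rv (x t) j = p" using xp unfolding rv_def by auto
        qed
        then show ?thesis unfolding valid_filter_def M_def Msel_def rcv
          using True sub M0 xp by auto
      next
        case False
        then show ?thesis unfolding M_def Msel_def rcv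
          using exists_valid_filter[of n f i "x t i" "rv (x t)"]
          by (simp add: someI_ex)
      qed
    qed
    then obtain z where z: "z \<in> (\<Inter>i\<in>H. X i)" and lim: "\<forall>i\<in>H. (\<lambda>t. x t i) \<longlonglongrightarrow> z"
      using consensus by blast
    obtain i where iS: "i \<in> S" using Sne by blast
    then have "(\<lambda>t. x t i) \<longlonglongrightarrow> z" using lim SH by blast
    moreover have "(\<lambda>t. x t i) = (\<lambda>t. p)" using xp iS by auto
    ultimately have "z = p" using LIMSEQ_unique tendsto_const by metis
    then show False using z pH by simp
  qed
qed

end
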